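(* Fix $k\in\mathbb{N}$ and positive constants $b_0,b_1,b_2,\lambda_0,\lambda_1$. There exists $C>0$ depending only on $b_0,b_1,\lambda_0,\lambda_1$ (and the fixed $k$) such that the following holds. Let $T\geq10$, $\ell<r$, $a^\pm\in\mathbb{R}^k$, $g:[\ell,r]\to\mathbb{R}$ Lipschitz with $g(\ell)=g(r)=0$, and $P\subset(\ell,\ell+T^{1/2})\cap(\ell,r)$ finite. Suppose that $r-\ell\leq b_0T$, $|P|\leq b_0T$, $|g(x)-g(y)|\leq b_1T|x-y|$ for all $x,y$, $a^\pm_j-a^\pm_{j+1}\geq\lambda_0T^{1/2}$ for $j\in\{1,\dots,k-1\}$, $a^-_k-g(\ell)\geq\lambda_1T$, $a^+_k-g(r)\geq\lambda_1T$, $a^-_1-g(\ell)\leq b_2T^2$, $a^+_1-g(r)\leq b_2T^2$. Then $\mathbb{E}_{\mathrm{free}}[W]\geq C^{-1}e^{-CT^{5/2}}$.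
   Context: $\mathbb{P}_{\mathrm{free}}$ (expectation $\mathbb{E}_{\mathrm{free}}$) is the law of $k$ independent Brownian bridges (diffusion parameter one) $\mathcal{L}=(\mathcal{L}_1,\dots,\mathcal{L}_k)$ on $[\ell,r]$ with $\mathcal{L}_j(\ell)=a^-_j$, $\mathcal{L}_j(r)=a^+_j$. $W(\mathcal{L})=1$ if $\mathcal{L}_j(p)>g(p)$ for all $p\in P$ and $j\in\{1,\dots,k\}$, and $W(\mathcal{L})=0$ otherwise. *)

theory Defs
  imports "HOL-Probability.Probability"
begin

definition heat :: "real \<Rightarrow> real \<Rightarrow> real" where
  "heat s y = normal_density 0 (sqrt s) y"

text \<open>Times t_0 = l < t_1 < ... < t_m < t_(m+1) = r, where ts = [t_1,...,t_m].\<close>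
definition bb_time :: "real \<Rightarrow> real \<Rightarrow> real list \<Rightarrow> nat \<Rightarrow> real" where
  "bb_time l r ts i = (if i = 0 then l else if i \<le> length ts then ts ! (i - 1) else r)"

text \<open>Joint Lebesgue density of (B(t_1),...,B(t_m)) for a Brownian bridge B on [l,r]
  with B(l) = a, B(r) = b (finite-dimensional distributions of the Brownian bridge),
  x i being the value at time t_(i+1).\<close>
definition bb_density :: "real \<Rightarrow> real \<Rightarrow> real \<Rightarrow> real \<Rightarrow> real list \<Rightarrow> (nat \<Rightarrow> real) \<Rightarrow> real" where
  "bb_density l r a b ts x =
     (let m = length ts;
          pos = (\<lambda>i. if i = 0 then a else if i \<le> m then x (i - 1) else b)
      in (\<Prod>i\<le>m. heat (bb_time l r ts (Suc i) - bb_time l r ts i) (pos (Suc i) - pos i))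
         / heat (r - l) (b - a))"

text \<open>E_free[W]: expectation of W(L) = 1[L_j(p) > g(p) for all p in P, j in 1..k] under the law of
  k independent Brownian bridges L_j on [l,r] from am j to ap j. Since W depends only on the
  values at the finitely many points of P, it is the integral of the indicator against the
  joint density of (L_j(p))_{j,p}, which is the product over j of the bridge densities.\<close>
definition E_free_W :: "nat \<Rightarrow> real \<Rightarrow> real \<Rightarrow> (nat \<Rightarrow> real) \<Rightarrow> (nat \<Rightarrow> real)
     \<Rightarrow> (real \<Rightarrow> real) \<Rightarrow> real set \<Rightarrow> ennreal" where
  "E_free_W k l r am ap g P =
     (let ts = sorted_list_of_set P; m = length ts
      in \<integral>\<^sup>+ x. indicator {x. \<forall>j\<in>{1..k}. \<forall>i<m. x (j, i) > g (ts ! i)} x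
                 * ennreal (\<Prod>j\<in>{1..k}. bb_density l r (am j) (ap j) ts (\<lambda>i. x (j, i)))
           \<partial>(PiM ({1..k} \<times> {..<m}) (\<lambda>_. lborel)))"

end

theory Submission
  imports Defs
begin

lemma heat_pos: "s > 0 \<Longrightarrow> heat s y > 0"
  unfolding heat_def by (simp add: normal_density_pos)

lemma heat_eq: "s > 0 \<Longrightarrow> heat s y = exp (- (y\<^sup>2) / (2 * s)) / sqrt (2 * pi * s)"
  unfolding heat_def normal_density_def by simp

lemma heat_mult:
  assumes s: "s>0" and t: "t>0"
  shows "heat s (y-u) * heat t (v-y) = heat (s+t) (v-u) * heat (s * t/(s+t)) (y - (t * u+s * v)/(s+t))"
proof -
  have st: "s * t/(s+t) > 0" using s t by simp
  have e: "- (y-u)\<^sup>2 / (2 * s) + - (v-y)\<^sup>2/(2 * t) = - (v-u)\<^sup>2/(2 * (s+t)) + - (y - (t * u+s * v)/(s+t))\<^sup>2 / (2 * (s * t/(s+t)))"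
  proof -
    have sp: "s+t \<noteq> 0" using s t by simp
    have m: "y - (t * u+s * v)/(s+t) = ((s+t) * y - t * u - s * v)/(s+t)" using sp by (simp add: field_simps)
    have p: "(y-u)\<^sup>2 * t * (s+t) + (v-y)\<^sup>2 * s * (s+t) = (v-u)\<^sup>2 * s * t + ((s+t) * y - t * u - s * v)\<^sup>2"
      by (simp add: power2_eq_square algebra_simps)
    define E where "E = (s+t) * y - t * u - s * v"
    have q: "(E/(s+t))\<^sup>2 / (2 * (s * t/(s+t))) = E\<^sup>2/(2 * s * t * (s+t))"
      using s t by (simp add: power2_eq_square divide_simps)
    have l: "- (y-u)\<^sup>2 / (2 * s) + - (v-y)\<^sup>2/(2 * t) = - ((y-u)\<^sup>2 * t * (s+t) + (v-y)\<^sup>2 * s * (s+t)) / (2 * s * t * (s+t))"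
      using s t by (simp add: divide_simps; simp add: algebra_simps power2_eq_square)
    have r: "- (v-u)\<^sup>2/(2 * (s+t)) + - E\<^sup>2/(2 * s * t * (s+t)) = - ((v-u)\<^sup>2 * s * t + E\<^sup>2) / (2 * s * t * (s+t))"
      using s t by (simp add: divide_simps; simp add: algebra_simps power2_eq_square)
    show ?thesis unfolding m E_def[symmetric] using q l r p unfolding E_def by simp
  qed
  have r: "sqrt (2 * pi * s) * sqrt (2 * pi * t) = sqrt (2 * pi * (s+t)) * sqrt (2 * pi * (s * t/(s+t)))"
    using s t by (simp add: real_sqrt_mult[symmetric] field_simps)
  show ?thesis
  proof -
    have sp: "s+t>0" using s t by simp
    have "heat s (y-u) * heat t (v-y) = exp (- (y-u)\<^sup>2 / (2 * s) + - (v-y)\<^sup>2/(2 * t)) / (sqrt (2 * pi * s) * sqrt (2 * pi * t))"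
      unfolding heat_eq[OF s] heat_eq[OF t] exp_add by simp
    also have "... = exp (- (v-u)\<^sup>2/(2 * (s+t)) + - (y - (t * u+s * v)/(s+t))\<^sup>2 / (2 * (s * t/(s+t)))) / (sqrt (2 * pi * (s+t)) * sqrt (2 * pi * (s * t/(s+t))))"
      unfolding e r ..
    also have "... = heat (s+t) (v-u) * heat (s * t/(s+t)) (y - (t * u+s * v)/(s+t))"
      unfolding heat_eq[OF sp] heat_eq[OF st] exp_add by simp
    finally show ?thesis .
  qed
qed
lemma exp4: "2 * pi \<le> exp (4::real)"
proof -
  have "exp (2::real) \<ge> 3" using exp_ge_add_one_self[of 2] by simp
  hence "exp (2::real) * exp 2 \<ge> 3 * 3" by (intro mult_mono) auto
  hence "exp (4::real) \<ge> 9" by (simp add: exp_add[symmetric])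
  thus ?thesis using pi_less_4 by simp
qed

lemma heat_lower:
  assumes w: "w > 0" and z: "0 \<le> z" "z \<le> d + sqrt w" and d: "d \<ge> 0"
  shows "heat w z \<ge> exp (- (d\<^sup>2 / w) - 3) / sqrt w"
proof -
  have "z\<^sup>2 \<le> (d + sqrt w)\<^sup>2" using z by (intro power_mono) auto
  also have "... \<le> 2 * d\<^sup>2 + 2 * w"
    using w sum_squares_bound[of d "sqrt w"] by (simp add: power2_eq_square algebra_simps)
  finally have zz: "z\<^sup>2 \<le> 2 * d\<^sup>2 + 2 * w" .
  have e1: "- (z\<^sup>2) / (2 * w) \<ge> - (d\<^sup>2 / w) - 1"
  proof -
    have "z\<^sup>2 / (2 * w) \<le> (2 * d\<^sup>2 + 2 * w) / (2 * w)" using zz w by (intro divide_right_mono) auto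
    also have "... = d\<^sup>2 / w + 1" using w by (simp add: field_simps)
    finally show ?thesis by simp
  qed
  have sq: "sqrt (2 * pi * w) \<le> exp 2 * sqrt w"
  proof -
    have "sqrt (2 * pi) \<le> sqrt (exp 4)" using exp4 by simp
    also have "sqrt (exp 4) = exp (2::real)"
    proof -
      have "exp (4::real) = (exp 2)\<^sup>2" by (simp add: power2_eq_square exp_add[symmetric])
      thus ?thesis by simp
    qed
    finally have "sqrt 2 * sqrt pi \<le> exp 2" by (simp add: real_sqrt_mult)
    thus ?thesis using w by (simp add: real_sqrt_mult mult_right_mono)
  qed
  have "exp (- (d\<^sup>2 / w) - 3) / sqrt w = exp (- (d\<^sup>2 / w) - 1) / (exp 2 * sqrt w)"
    using w by (simp add: exp_diff field_simps exp_add[symmetric])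
  also have "... \<le> exp (- (z\<^sup>2) / (2 * w)) / (exp 2 * sqrt w)"
    using e1 w by (intro divide_right_mono) auto
  also have "... \<le> exp (- (z\<^sup>2) / (2 * w)) / sqrt (2 * pi * w)"
    using sq w by (intro divide_left_mono) auto
  finally show ?thesis unfolding heat_eq[OF w] .
qed

lemma step1d:
  assumes s: "s > 0" and t: "t > 0" and d: "d \<ge> 0" and mu: "(t * u + s * v)/(s+t) \<ge> G - d"
  shows "(\<integral>\<^sup>+y. ennreal (if G < y then heat s (y-u) * heat t (v-y) else 0) \<partial>lborel)
     \<ge> ennreal (heat (s+t) (v-u) * exp (- (d\<^sup>2 * (s+t) / (s * t)) - 3))"
proof -
  define w where "w = s * t / (s+t)"
  define \<mu> where "\<mu> = (t * u + s * v)/(s+t)"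
  define A where "A = max G \<mu>"
  define H where "H = heat (s+t) (v-u)"
  have w: "w > 0" using s t by (simp add: w_def)
  have H: "H > 0" using s t by (simp add: H_def heat_pos)
  define c where "c = H * (exp (- (d\<^sup>2 / w) - 3) / sqrt w)"
  have c: "c \<ge> 0" using H w by (simp add: c_def)
  have pt: "ennreal c * indicator {A<..A + sqrt w} y \<le> ennreal (if G < y then heat s (y-u) * heat t (v-y) else 0)" for y
  proof (cases "y \<in> {A<..A + sqrt w}")
    case True
    hence y1: "G < y" "\<mu> < y" "y \<le> A + sqrt w" by (auto simp: A_def)
    have "A - \<mu> \<le> d" using mu d by (auto simp: A_def \<mu>_def)
    hence z: "0 \<le> y - \<mu>" "y - \<mu> \<le> d + sqrt w" using y1 by auto
    have "c \<le> H * heat w (y - \<mu>)" unfolding c_def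
      using heat_lower[OF w z d] H by (intro mult_left_mono) auto
    also have "... = heat s (y-u) * heat t (v-y)"
      unfolding heat_mult[OF s t] H_def w_def \<mu>_def ..
    finally show ?thesis using True y1 by (simp add: ennreal_leI)
  qed simp
  have "ennreal (H * exp (- (d\<^sup>2 / w) - 3)) = ennreal c * ennreal (sqrt w)"
    using w H by (simp add: c_def ennreal_mult[symmetric])
  also have "... = ennreal c * emeasure lborel {A<..A + sqrt w}" using w by simp
  also have "... = (\<integral>\<^sup>+y. ennreal c * indicator {A<..A + sqrt w} y \<partial>lborel)"
    by (rule nn_integral_cmult_indicator[symmetric]) simp
  also have "... \<le> (\<integral>\<^sup>+y. ennreal (if G < y then heat s (y-u) * heat t (v-y) else 0) \<partial>lborel)"
    by (intro nn_integral_mono pt)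
  finally show ?thesis using s t by (simp add: H_def w_def field_simps)
qed

lemma psf: "product_sigma_finite (\<lambda>_::'i. lborel::real measure)"
  by (simp add: product_sigma_finite_def lborel.sigma_finite_measure_axioms)

lemma heat_measurable[measurable]: "heat c \<in> borel_measurable borel"
  unfolding heat_def[abs_def] by measurable

definition Lv :: "real \<Rightarrow> real \<Rightarrow> real \<Rightarrow> real \<Rightarrow> real" where
  "Lv \<beta> l r x = \<beta> * min (x - l) (r - x)"

definition posb :: "(nat \<Rightarrow> real) \<Rightarrow> (nat \<times> nat \<Rightarrow> real) \<Rightarrow> nat \<Rightarrow> nat \<Rightarrow> real" where
  "posb am x j i = (if i = 0 then am j else x (j, i - 1))"

definition psi :: "real \<Rightarrow> (nat \<Rightarrow> real) \<Rightarrow> real \<Rightarrow> (nat \<Rightarrow> real) \<Rightarrow> (nat \<Rightarrow> real) \<Rightarrow> nat \<Rightarrow> nat \<Rightarrow> (nat \<times> nat \<Rightarrow> real) \<Rightarrow> real" where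
  "psi \<beta> \<tau> r am ap n j x =
     (\<Prod>i<n. if Lv \<beta> (\<tau> 0) r (\<tau> (Suc i)) < x (j,i) then heat (\<tau> (Suc i) - \<tau> i) (x (j,i) - posb am x j i) else 0)
     * heat (r - \<tau> n) (ap j - posb am x j n)"

lemma posb_measurable:
  assumes "i > 0 \<Longrightarrow> (j, i - 1) \<in> I"
  shows "(\<lambda>x. posb am x j i) \<in> borel_measurable (PiM I (\<lambda>_. lborel))"
proof (cases "i = 0")
  case True thus ?thesis by (simp add: posb_def)
next
  case False
  hence "(j, i - 1) \<in> I" using assms by simp
  thus ?thesis using False unfolding posb_def by simp
qed

lemma psi_measurable:
  assumes "j \<in> J"
  shows "psi \<beta> \<tau> r am ap n j \<in> borel_measurable (PiM (J \<times> {..<n}) (\<lambda>_. lborel))"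
proof -
  have [measurable]: "(\<lambda>x. posb am x j i) \<in> borel_measurable (PiM (J \<times> {..<n}) (\<lambda>_. lborel))" if "i \<le> n" for i
    using assms that by (intro posb_measurable) auto
  have [measurable]: "(\<lambda>x. x (j,i)) \<in> borel_measurable (PiM (J \<times> {..<n}) (\<lambda>_. lborel))" if "i < n" for i
    using assms that by simp
  have [measurable]: "(\<lambda>x. if Lv \<beta> (\<tau> 0) r (\<tau> (Suc i)) < x (j,i) then heat (\<tau> (Suc i) - \<tau> i) (x (j,i) - posb am x j i) else 0) \<in> borel_measurable (PiM (J \<times> {..<n}) (\<lambda>_. lborel))" if "i < n" for i
  proof -
    have [measurable]: "(\<lambda>x. posb am x j i) \<in> borel_measurable (PiM (J \<times> {..<n}) (\<lambda>_. lborel))"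
      using that assms by (intro posb_measurable) auto
    have [measurable]: "(\<lambda>x. x (j,i)) \<in> borel_measurable (PiM (J \<times> {..<n}) (\<lambda>_. lborel))"
      using that assms by simp
    show ?thesis by measurable
  qed
  have [measurable]: "(\<lambda>x. posb am x j n) \<in> borel_measurable (PiM (J \<times> {..<n}) (\<lambda>_. lborel))"
    using assms by (intro posb_measurable) auto
  show ?thesis unfolding psi_def[abs_def]
    by measurable
qed
lemma tent_step1:
  assumes "l \<le> p" "p < q" "q < r" "\<beta> \<ge> 0" "u \<ge> Lv \<beta> l r p" "v \<ge> 0"
  shows "((r-q) * u + (q-p) * v)/((q-p)+(r-q)) \<ge> Lv \<beta> l r q - 2 * \<beta> * min (q-p) (r-q)"
proof -
  define s where "s = q - p"
  define t where "t = r - q"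
  have s: "s > 0" and t: "t > 0" using assms by (auto simp: s_def t_def)
  have L0: "Lv \<beta> l r p \<ge> 0" using assms by (simp add: Lv_def)
  have Lp: "Lv \<beta> l r p \<le> \<beta> * (s+t)" using assms by (simp add: Lv_def s_def t_def mult_left_mono)
  have Lq: "Lv \<beta> l r q \<le> \<beta> * t" using assms by (simp add: Lv_def t_def mult_left_mono)
  have Lpq: "Lv \<beta> l r q \<le> Lv \<beta> l r p + \<beta> * s"
  proof -
    have "min (q - l) (r - q) \<le> min (p - l) (r - p) + s" using assms by (auto simp: s_def)
    hence "\<beta> * min (q - l) (r - q) \<le> \<beta> * (min (p - l) (r - p) + s)" using assms by (intro mult_left_mono)
    thus ?thesis by (simp add: Lv_def algebra_simps)
  qed
  have u0: "u \<ge> 0" using L0 assms by linarith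
  have "(t * u + s * v)/(s+t) \<ge> t * u / (s+t)" using s t assms by (intro divide_right_mono) auto
  moreover have "t * u / (s+t) \<ge> t * Lv \<beta> l r p / (s+t)" using s t assms by (intro divide_right_mono mult_left_mono) auto
  moreover have "Lv \<beta> l r q - 2 * \<beta> * min s t \<le> t * Lv \<beta> l r p / (s+t)"
  proof (cases "s \<le> t")
    case True
    have "s * Lv \<beta> l r p / (s+t) \<le> s * (\<beta> * (s+t)) / (s+t)" using s t Lp by (intro divide_right_mono mult_left_mono) auto
    also have "... = \<beta> * s" using s t by simp
    finally have a: "s * Lv \<beta> l r p / (s+t) \<le> \<beta> * s" .
    have b: "t * Lv \<beta> l r p / (s+t) = Lv \<beta> l r p - s * Lv \<beta> l r p / (s+t)" using s t by (simp add: field_simps)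
    show ?thesis using a b Lpq True by (simp add: min_def)
  next
    case False
    have "0 \<le> t * Lv \<beta> l r p / (s+t)" using s t L0 by simp
    moreover have "\<beta> * t \<ge> 0" using t assms(4) by simp
    ultimately show ?thesis using Lq False by (simp add: min_def)
  qed
  ultimately show ?thesis by (simp add: s_def t_def)
qed

lemma tent_step2:
  fixes s t \<beta> :: real
  assumes "s > 0" "t > 0" "\<beta> \<ge> 0"
  shows "(2 * \<beta> * min s t)\<^sup>2 * (s+t) / (s * t) \<le> 8 * \<beta>\<^sup>2 * s"
proof (cases "s \<le> t")
  case True
  have "(2 * \<beta> * min s t)\<^sup>2 * (s+t) / (s * t) = 4 * \<beta>\<^sup>2 * s * ((s+t)/t)" using True assms by (simp add: power2_eq_square field_simps)
  also have "... \<le> 4 * \<beta>\<^sup>2 * s * 2" using True assms by (intro mult_left_mono) (auto simp: field_simps)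
  finally show ?thesis by simp
next
  case False
  have "(2 * \<beta> * min s t)\<^sup>2 * (s+t) / (s * t) = 4 * \<beta>\<^sup>2 * t * ((s+t)/s)" using False assms by (simp add: power2_eq_square field_simps)
  also have "... \<le> 4 * \<beta>\<^sup>2 * s * 2" using False assms by (intro mult_mono) (auto simp: field_simps)
  finally show ?thesis by simp
qed

lemma step_tent:
  assumes "l \<le> p" "p < q" "q < r" "\<beta> \<ge> 0" "u \<ge> Lv \<beta> l r p" "v \<ge> 0"
  shows "(\<integral>\<^sup>+y. ennreal (if Lv \<beta> l r q < y then heat (q-p) (y-u) * heat (r-q) (v-y) else 0) \<partial>lborel)
     \<ge> ennreal (heat (r-p) (v-u) * exp (- (8 * \<beta>\<^sup>2 * (q-p)) - 3))"
proof -
  have s: "q - p > 0" and t: "r - q > 0" using assms by auto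
  have d: "2 * \<beta> * min (q-p) (r-q) \<ge> 0" using assms by simp
  have "ennreal (heat (r-p) (v-u) * exp (- (8 * \<beta>\<^sup>2 * (q-p)) - 3))
     \<le> ennreal (heat ((q-p)+(r-q)) (v-u) * exp (- ((2 * \<beta> * min (q-p) (r-q))\<^sup>2 * ((q-p)+(r-q)) / ((q-p) * (r-q))) - 3))"
    using tent_step2[OF s t assms(4)] assms heat_pos[of "r-p" "v-u"]
    by (intro ennreal_leI mult_left_mono) auto
  also have "... \<le> (\<integral>\<^sup>+y. ennreal (if Lv \<beta> l r q < y then heat (q-p) (y-u) * heat (r-q) (v-y) else 0) \<partial>lborel)"
    by (rule step1d[OF s t d tent_step1[OF assms]])
  finally show ?thesis .
qed

definition Fp :: "real \<Rightarrow> (nat \<Rightarrow> real) \<Rightarrow> real \<Rightarrow> (nat \<Rightarrow> real) \<Rightarrow> nat \<Rightarrow> nat \<Rightarrow> (nat \<times> nat \<Rightarrow> real) \<Rightarrow> real" where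
  "Fp \<beta> \<tau> r am n j x =
     (\<Prod>i<n. if Lv \<beta> (\<tau> 0) r (\<tau> (Suc i)) < x (j,i) then heat (\<tau> (Suc i) - \<tau> i) (x (j,i) - posb am x j i) else 0)"

lemma psi_Fp: "psi \<beta> \<tau> r am ap n j x = Fp \<beta> \<tau> r am n j x * heat (r - \<tau> n) (ap j - posb am x j n)"
  unfolding psi_def Fp_def ..

lemma Fp_nonneg: "(\<forall>i<n. \<tau> i < \<tau> (Suc i)) \<Longrightarrow> Fp \<beta> \<tau> r am n j x \<ge> 0"
  unfolding Fp_def by (intro prod_nonneg) (auto intro!: less_imp_le[OF heat_pos])

lemma inner:
  assumes J: "finite J" and mono: "\<forall>i<Suc n. \<tau> i < \<tau> (Suc i)" and r: "\<tau> (Suc n) < r"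
    and l: "\<tau> 0 \<le> \<tau> n" and b: "\<beta> \<ge> 0" and ap: "\<forall>j\<in>J. ap j \<ge> 0"
    and H: "\<forall>j\<in>J. Lv \<beta> (\<tau> 0) r (\<tau> n) \<le> posb am x j n"
  shows "(\<integral>\<^sup>+y. ennreal (\<Prod>j\<in>J. psi \<beta> \<tau> r am ap (Suc n) j (merge (J\<times>{..<n}) (J\<times>{n}) (x,y))) \<partial>PiM (J\<times>{n}) (\<lambda>_. lborel))
     \<ge> ennreal (\<Prod>j\<in>J. psi \<beta> \<tau> r am ap n j x) * ennreal (exp (- (8 * \<beta>\<^sup>2 * (\<tau> (Suc n) - \<tau> n)) - 3) ^ card J)"
proof -
  define E where "E = exp (- (8 * \<beta>\<^sup>2 * (\<tau> (Suc n) - \<tau> n)) - 3)"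
  define f where "f = (\<lambda>j w. if Lv \<beta> (\<tau> 0) r (\<tau> (Suc n)) < w then heat (\<tau> (Suc n) - \<tau> n) (w - posb am x j n) * heat (r - \<tau> (Suc n)) (ap j - w) else 0)"
  have s: "\<tau> (Suc n) - \<tau> n > 0" using mono by simp
  have t: "r - \<tau> (Suc n) > 0" using r by simp
  have hp: "heat (r - \<tau> n) y \<ge> 0" for y using heat_pos[of "r - \<tau> n" y] s t by simp
  have f0: "f j w \<ge> 0" for j w using heat_pos[OF s] heat_pos[OF t] by (simp add: f_def less_imp_le)
  have F0: "Fp \<beta> \<tau> r am n j x \<ge> 0" for j using mono by (intro Fp_nonneg) auto
  have fm[measurable]: "f j \<in> borel_measurable borel" for j unfolding f_def by measurable
  have eq: "(\<Prod>j\<in>J. psi \<beta> \<tau> r am ap (Suc n) j (merge (J\<times>{..<n}) (J\<times>{n}) (x,y)))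
     = (\<Prod>j\<in>J. Fp \<beta> \<tau> r am n j x) * (\<Prod>p\<in>J\<times>{n}. f (fst p) (y p))" for y
  proof -
    have "(\<Prod>p\<in>J\<times>{n}. f (fst p) (y p)) = (\<Prod>j\<in>J. f j (y (j,n)))"
    proof -
      have "J \<times> {n} = (\<lambda>j. (j,n)) ` J" by auto
      moreover have "inj_on (\<lambda>j. (j,n)) J" by (auto simp: inj_on_def)
      ultimately show ?thesis by (simp add: prod.reindex)
    qed
    moreover have "psi \<beta> \<tau> r am ap (Suc n) j (merge (J\<times>{..<n}) (J\<times>{n}) (x,y)) = Fp \<beta> \<tau> r am n j x * f j (y (j,n))" if j: "j \<in> J" for j
    proof -
      let ?z = "merge (J\<times>{..<n}) (J\<times>{n}) (x,y)"
      have zi: "?z (j,i) = x (j,i)" if "i < n" for i using j that by (simp add: merge_def)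
      have zn: "?z (j,n) = y (j,n)" using j by (simp add: merge_def)
      have pz: "posb am ?z j i = posb am x j i" if "i \<le> n" for i
        using that zi by (cases i) (auto simp: posb_def)
      have pzn: "posb am ?z j (Suc n) = y (j,n)" using zn by (simp add: posb_def)
      have "Fp \<beta> \<tau> r am n j ?z = Fp \<beta> \<tau> r am n j x"
        unfolding Fp_def by (intro prod.cong refl) (simp add: zi pz)
      thus ?thesis unfolding psi_def Fp_def[symmetric]
        by (simp add: Fp_def[of _ _ _ _ "Suc n"] zn pz pzn f_def)
           (simp add: Fp_def)
    qed
    ultimately show ?thesis by (simp add: prod.distrib)
  qed
  have "(\<integral>\<^sup>+y. ennreal (\<Prod>j\<in>J. psi \<beta> \<tau> r am ap (Suc n) j (merge (J\<times>{..<n}) (J\<times>{n}) (x,y))) \<partial>PiM (J\<times>{n}) (\<lambda>_. lborel))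
    = (\<integral>\<^sup>+y. ennreal (\<Prod>j\<in>J. Fp \<beta> \<tau> r am n j x) * (\<Prod>p\<in>J\<times>{n}. ennreal (f (fst p) (y p))) \<partial>PiM (J\<times>{n}) (\<lambda>_. lborel))"
    unfolding eq using F0 f0 by (simp add: ennreal_mult prod_ennreal prod_nonneg)
  also have "... = ennreal (\<Prod>j\<in>J. Fp \<beta> \<tau> r am n j x) * (\<integral>\<^sup>+y. (\<Prod>p\<in>J\<times>{n}. ennreal (f (fst p) (y p))) \<partial>PiM (J\<times>{n}) (\<lambda>_. lborel))"
  proof (rule nn_integral_cmult, rule borel_measurable_prod_ennreal)
    fix p assume p: "p \<in> J \<times> {n}"
    have [measurable]: "(\<lambda>y. y p) \<in> borel_measurable (PiM (J\<times>{n}) (\<lambda>_. lborel))" using p by simp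
    show "(\<lambda>y. ennreal (f (fst p) (y p))) \<in> borel_measurable (PiM (J\<times>{n}) (\<lambda>_. lborel))" by measurable
  qed
  also have "(\<integral>\<^sup>+y. (\<Prod>p\<in>J\<times>{n}. ennreal (f (fst p) (y p))) \<partial>PiM (J\<times>{n}) (\<lambda>_. lborel))
      = (\<Prod>p\<in>J\<times>{n}. \<integral>\<^sup>+w. ennreal (f (fst p) w) \<partial>lborel)"
    using product_sigma_finite.product_nn_integral_prod[OF psf, of "J\<times>{n}" "\<lambda>p w. ennreal (f (fst p) w)"] J
    by simp
  finally have A: "(\<integral>\<^sup>+y. ennreal (\<Prod>j\<in>J. psi \<beta> \<tau> r am ap (Suc n) j (merge (J\<times>{..<n}) (J\<times>{n}) (x,y))) \<partial>PiM (J\<times>{n}) (\<lambda>_. lborel))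
     = ennreal (\<Prod>j\<in>J. Fp \<beta> \<tau> r am n j x) * (\<Prod>p\<in>J\<times>{n}. \<integral>\<^sup>+w. ennreal (f (fst p) w) \<partial>lborel)" .
  have B: "(\<Prod>p\<in>J\<times>{n}. \<integral>\<^sup>+w. ennreal (f (fst p) w) \<partial>lborel) \<ge> (\<Prod>p\<in>J\<times>{n}. ennreal (heat (r - \<tau> n) (ap (fst p) - posb am x (fst p) n) * E))"
  proof (intro prod_mono_ennreal)
    fix p assume p: "p \<in> J \<times> {n}"
    show "ennreal (heat (r - \<tau> n) (ap (fst p) - posb am x (fst p) n) * E) \<le> \<integral>\<^sup>+w. ennreal (f (fst p) w) \<partial>lborel"
      unfolding f_def E_def using p H ap mono r b l
      by (intro step_tent) auto
  qed
  have C: "(\<Prod>p\<in>J\<times>{n}. ennreal (heat (r - \<tau> n) (ap (fst p) - posb am x (fst p) n) * E))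
     = ennreal (\<Prod>j\<in>J. heat (r - \<tau> n) (ap j - posb am x j n)) * ennreal (E ^ card J)"
  proof -
    have "J \<times> {n} = (\<lambda>j. (j,n)) ` J" by auto
    moreover have "inj_on (\<lambda>j. (j,n)) J" by (auto simp: inj_on_def)
    ultimately have "(\<Prod>p\<in>J\<times>{n}. ennreal (heat (r - \<tau> n) (ap (fst p) - posb am x (fst p) n) * E))
       = (\<Prod>j\<in>J. ennreal (heat (r - \<tau> n) (ap j - posb am x j n) * E))" by (simp add: prod.reindex)
    also have "... = ennreal (\<Prod>j\<in>J. heat (r - \<tau> n) (ap j - posb am x j n) * E)"
      using hp by (intro prod_ennreal) (auto simp: E_def)
    also have "... = ennreal ((\<Prod>j\<in>J. heat (r - \<tau> n) (ap j - posb am x j n)) * E ^ card J)"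
      by (simp add: prod.distrib)
    finally show ?thesis using hp
      by (simp add: ennreal_mult prod_nonneg E_def)
  qed
  have D: "ennreal (\<Prod>j\<in>J. psi \<beta> \<tau> r am ap n j x) = ennreal (\<Prod>j\<in>J. Fp \<beta> \<tau> r am n j x) * ennreal (\<Prod>j\<in>J. heat (r - \<tau> n) (ap j - posb am x j n))"
    unfolding psi_Fp prod.distrib using F0 hp
    by (simp add: ennreal_mult prod_nonneg)
  show ?thesis unfolding A D E_def[symmetric] using B C
    by (simp add: mult.assoc mult_left_mono)
qed

lemma prod_psi_measurable:
  "(\<lambda>x. ennreal (\<Prod>j\<in>J. psi \<beta> \<tau> r am ap n j x)) \<in> borel_measurable (PiM (J\<times>{..<n}) (\<lambda>_. lborel))"
  by (rule measurable_compose[where g=ennreal], rule borel_measurable_prod, rule psi_measurable) auto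

lemma mono_bounded: "\<forall>i<n. \<tau> i < \<tau> (Suc i) \<Longrightarrow> (\<tau>::nat\<Rightarrow>real) 0 \<le> \<tau> n"
proof (induction n)
  case (Suc n)
  hence "\<tau> 0 \<le> \<tau> n" by simp
  moreover have "\<tau> n < \<tau> (Suc n)" using Suc.prems by simp
  ultimately show ?case by simp
qed simp

lemma main_ind:
  assumes J: "finite J" and mono: "\<forall>i<n. \<tau> i < \<tau> (Suc i)" and r: "\<tau> n < r" and b: "\<beta> \<ge> 0"
    and am: "\<forall>j\<in>J. am j \<ge> 0" and ap: "\<forall>j\<in>J. ap j \<ge> 0"
  shows "(\<integral>\<^sup>+x. ennreal (\<Prod>j\<in>J. psi \<beta> \<tau> r am ap n j x) \<partial>PiM (J\<times>{..<n}) (\<lambda>_. lborel))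
     \<ge> ennreal ((\<Prod>j\<in>J. heat (r - \<tau> 0) (ap j - am j)) * exp (- (8 * \<beta>\<^sup>2 * (\<tau> n - \<tau> 0)) - 3 * real n) ^ card J)"
  using mono r
proof (induction n)
  case 0
  have "(\<integral>\<^sup>+x. ennreal (\<Prod>j\<in>J. psi \<beta> \<tau> r am ap 0 j x) \<partial>PiM (J\<times>{..<0}) (\<lambda>_. lborel))
      = (\<integral>\<^sup>+x. ennreal (\<Prod>j\<in>J. heat (r - \<tau> 0) (ap j - am j)) \<partial>PiM ({}::(nat\<times>nat) set) (\<lambda>_. lborel::real measure))"
    by (simp add: psi_def posb_def)
  also have "... = ennreal (\<Prod>j\<in>J. heat (r - \<tau> 0) (ap j - am j))"
    by (simp add: nn_integral_const space_PiM_empty)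
  finally show ?case by simp
next
  case (Suc n)
  have mono': "\<forall>i<n. \<tau> i < \<tau> (Suc i)" using Suc.prems by auto
  have rn: "\<tau> n < r" using Suc.prems by (metis lessI order.strict_trans)
  note IH = Suc.IH[OF mono' rn]
  have l: "\<tau> 0 \<le> \<tau> n" using mono_bounded[OF mono'] .
  define E where "E = exp (- (8 * \<beta>\<^sup>2 * (\<tau> (Suc n) - \<tau> n)) - 3)"
  define H where "H = (\<Prod>j\<in>J. heat (r - \<tau> 0) (ap j - am j))"
  have H0: "H \<ge> 0" unfolding H_def using rn l by (intro prod_nonneg) (auto intro!: less_imp_le[OF heat_pos])
  have set: "J\<times>{..<Suc n} = J\<times>{..<n} \<union> J\<times>{n}" by auto
  have meas: "(\<lambda>x. ennreal (\<Prod>j\<in>J. psi \<beta> \<tau> r am ap (Suc n) j x)) \<in> borel_measurable (PiM (J\<times>{..<n} \<union> J\<times>{n}) (\<lambda>_. lborel))"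
    unfolding set[symmetric] by (rule prod_psi_measurable)
  have S1: "(\<integral>\<^sup>+x. ennreal (\<Prod>j\<in>J. psi \<beta> \<tau> r am ap (Suc n) j x) \<partial>PiM (J\<times>{..<Suc n}) (\<lambda>_. lborel))
     = (\<integral>\<^sup>+x. (\<integral>\<^sup>+y. ennreal (\<Prod>j\<in>J. psi \<beta> \<tau> r am ap (Suc n) j (merge (J\<times>{..<n}) (J\<times>{n}) (x,y))) \<partial>PiM (J\<times>{n}) (\<lambda>_. lborel)) \<partial>PiM (J\<times>{..<n}) (\<lambda>_. lborel))"
    unfolding set by (rule product_sigma_finite.product_nn_integral_fold[OF psf _ _ _ meas]) (auto simp: J)
  have S2: "(\<integral>\<^sup>+x. (\<integral>\<^sup>+y. ennreal (\<Prod>j\<in>J. psi \<beta> \<tau> r am ap (Suc n) j (merge (J\<times>{..<n}) (J\<times>{n}) (x,y))) \<partial>PiM (J\<times>{n}) (\<lambda>_. lborel)) \<partial>PiM (J\<times>{..<n}) (\<lambda>_. lborel)) \<ge> (\<integral>\<^sup>+x. ennreal (\<Prod>j\<in>J. psi \<beta> \<tau> r am ap n j x) * ennreal (E ^ card J) \<partial>PiM (J\<times>{..<n}) (\<lambda>_. lborel))"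
  proof (intro nn_integral_mono)
    fix x
    show "ennreal (\<Prod>j\<in>J. psi \<beta> \<tau> r am ap n j x) * ennreal (E ^ card J) \<le> (\<integral>\<^sup>+y. ennreal (\<Prod>j\<in>J. psi \<beta> \<tau> r am ap (Suc n) j (merge (J\<times>{..<n}) (J\<times>{n}) (x,y))) \<partial>PiM (J\<times>{n}) (\<lambda>_. lborel))"
    proof (cases "\<forall>j\<in>J. Lv \<beta> (\<tau> 0) r (\<tau> n) \<le> posb am x j n")
      case True
      show ?thesis unfolding E_def
        by (rule inner[OF J Suc.prems(1) Suc.prems(2) l b ap True])
    next
      case False
      then obtain j where j: "j \<in> J" "posb am x j n < Lv \<beta> (\<tau> 0) r (\<tau> n)" by force
      have "n \<noteq> 0"
      proof
        assume "n = 0"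
        thus False using j am rn by (auto simp: posb_def Lv_def)
      qed
      then obtain n' where n': "n = Suc n'" by (cases n) auto
      have "x (j,n') < Lv \<beta> (\<tau> 0) r (\<tau> (Suc n'))" using j n' by (simp add: posb_def)
      hence F: "Fp \<beta> \<tau> r am n j x = 0" unfolding Fp_def n' by (simp add: prod.lessThan_Suc)
      have "(\<Prod>j\<in>J. psi \<beta> \<tau> r am ap n j x) = 0"
        by (rule prod_zero[OF J], rule bexI[OF _ j(1)]) (simp add: psi_Fp F)
      thus ?thesis by simp
    qed
  qed
  have S3: "(\<integral>\<^sup>+x. ennreal (\<Prod>j\<in>J. psi \<beta> \<tau> r am ap n j x) * ennreal (E ^ card J) \<partial>PiM (J\<times>{..<n}) (\<lambda>_. lborel))
     = (\<integral>\<^sup>+x. ennreal (\<Prod>j\<in>J. psi \<beta> \<tau> r am ap n j x) \<partial>PiM (J\<times>{..<n}) (\<lambda>_. lborel)) * ennreal (E ^ card J)"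
    by (rule nn_integral_multc[OF prod_psi_measurable])
  have S4: "(\<integral>\<^sup>+x. ennreal (\<Prod>j\<in>J. psi \<beta> \<tau> r am ap n j x) \<partial>PiM (J\<times>{..<n}) (\<lambda>_. lborel)) * ennreal (E ^ card J) \<ge> ennreal (H * exp (- (8 * \<beta>\<^sup>2 * (\<tau> n - \<tau> 0)) - 3 * real n) ^ card J) * ennreal (E ^ card J)"
    using IH unfolding H_def by (intro mult_right_mono) auto
  have S5: "ennreal (H * exp (- (8 * \<beta>\<^sup>2 * (\<tau> n - \<tau> 0)) - 3 * real n) ^ card J) * ennreal (E ^ card J)
     = ennreal (H * exp (- (8 * \<beta>\<^sup>2 * (\<tau> (Suc n) - \<tau> 0)) - 3 * real (Suc n)) ^ card J)"
  proof -
    have "exp (- (8 * \<beta>\<^sup>2 * (\<tau> n - \<tau> 0)) - 3 * real n) * E = exp (- (8 * \<beta>\<^sup>2 * (\<tau> (Suc n) - \<tau> 0)) - 3 * real (Suc n))"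
      unfolding E_def exp_add[symmetric] by (simp add: algebra_simps)
    hence "H * exp (- (8 * \<beta>\<^sup>2 * (\<tau> n - \<tau> 0)) - 3 * real n) ^ card J * E ^ card J = H * exp (- (8 * \<beta>\<^sup>2 * (\<tau> (Suc n) - \<tau> 0)) - 3 * real (Suc n)) ^ card J"
      by (simp add: power_mult_distrib[symmetric] mult.assoc)
    moreover have "E ^ card J \<ge> 0" by (simp add: E_def)
    ultimately show ?thesis using H0 by (simp add: ennreal_mult[symmetric])
  qed
  note S5[symmetric]
  also note S4
  also note S3[symmetric]
  also note S2
  also note S1[symmetric]
  finally show ?case unfolding H_def .
qed

lemma chain_ge:
  fixes f :: "nat \<Rightarrow> real" and k j :: nat
  assumes "\<forall>j\<in>{1..<k}. f (j+1) \<le> (f j::real)" "1 \<le> j" "j \<le> k"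
  shows "f k \<le> f j"
  using assms(3)
proof (induction j rule: inc_induct)
  case (step n)
  have "f (Suc n) \<le> f n" using assms(1) assms(2) step.hyps by auto
  thus ?case using step.IH by simp
qed simp

lemma key:
  fixes k :: nat and b0 b1 T l r :: real and am ap :: "nat \<Rightarrow> real" and g :: "real \<Rightarrow> real" and P :: "real set"
  assumes b1: "b1 > 0" and T: "T \<ge> 10" and lr: "l < r" and fin: "finite P"
    and Psub: "P \<subseteq> {l<..<l + sqrt T} \<inter> {l<..<r}"
    and lip: "\<forall>x\<in>{l..r}. \<forall>y\<in>{l..r}. \<bar>g x - g y\<bar> \<le> b1 * T * \<bar>x - y\<bar>"
    and gl: "g l = 0" and gr: "g r = 0"
    and am: "\<forall>j\<in>{1..k}. am j \<ge> 0" and ap: "\<forall>j\<in>{1..k}. ap j \<ge> 0"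
  shows "E_free_W k l r am ap g P \<ge> ennreal (exp (- (8 * (b1 * T)\<^sup>2 * sqrt T) - 3 * real (card P)) ^ k)"
proof -
  define ts where "ts = sorted_list_of_set P"
  define m where "m = length ts"
  define \<tau> where "\<tau> = bb_time l r ts"
  define \<beta> where "\<beta> = b1 * T"
  define J where "J = {1..k}"
  have \<beta>: "\<beta> \<ge> 0" using b1 T by (simp add: \<beta>_def)
  have m: "m = card P" using fin by (simp add: m_def ts_def)
  have setts: "set ts = P" using fin by (simp add: ts_def)
  have sw: "sorted_wrt (<) ts" by (simp add: ts_def)
  have tsP: "ts ! i \<in> P" if "i < m" for i using that setts m_def by auto
  have \<tau>0: "\<tau> 0 = l" by (simp add: \<tau>_def bb_time_def)
  have \<tau>S: "\<tau> (Suc i) = ts ! i" if "i < m" for i using that by (simp add: \<tau>_def bb_time_def m_def)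
  have mono: "\<forall>i<m. \<tau> i < \<tau> (Suc i)"
  proof (intro allI impI)
    fix i assume i: "i < m"
    show "\<tau> i < \<tau> (Suc i)"
    proof (cases i)
      case 0 thus ?thesis using tsP[OF i] Psub \<tau>0 \<tau>S[OF i] by auto
    next
      case (Suc i')
      have "ts ! i' < ts ! i" using sorted_wrt_nth_less[OF sw, of i' i] i Suc by (simp add: m_def)
      thus ?thesis using \<tau>S[OF i] \<tau>S[of i'] i Suc by simp
    qed
  qed
  have \<tau>m: "\<tau> m < r \<and> \<tau> m - \<tau> 0 \<le> sqrt T"
  proof (cases m)
    case 0 thus ?thesis using lr \<tau>0 T by simp
  next
    case (Suc m')
    hence "ts ! m' \<in> P" using tsP by simp
    thus ?thesis using \<tau>S[of m'] Suc Psub \<tau>0 by auto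
  qed
  have gle: "g p \<le> Lv \<beta> l r p" if "p \<in> P" for p
  proof -
    have p: "l < p" "p < r" using that Psub by auto
    have "\<bar>g p - g l\<bar> \<le> \<beta> * \<bar>p - l\<bar>" using lip[rule_format, of p l] p lr unfolding \<beta>_def by auto
    hence 1: "g p \<le> \<beta> * (p - l)" using gl p by simp
    have "\<bar>g p - g r\<bar> \<le> \<beta> * \<bar>p - r\<bar>" using lip[rule_format, of p r] p lr unfolding \<beta>_def by auto
    hence 2: "g p \<le> \<beta> * (r - p)" using gr p by simp
    show ?thesis using 1 2 by (simp add: Lv_def min_def)
  qed
  define Hc where "Hc = (\<Prod>j\<in>J. heat (r - l) (ap j - am j))"
  have Hc: "Hc > 0" unfolding Hc_def using lr by (intro prod_pos) (auto intro: heat_pos)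
  have pt: "ennreal (\<Prod>j\<in>J. psi \<beta> \<tau> r am ap m j x) * ennreal (1 / Hc)
     \<le> indicator {x. \<forall>j\<in>{1..k}. \<forall>i<m. x (j, i) > g (ts ! i)} x
                 * ennreal (\<Prod>j\<in>{1..k}. bb_density l r (am j) (ap j) ts (\<lambda>i. x (j, i)))" for x
  proof (cases "\<forall>j\<in>J. \<forall>i<m. Lv \<beta> (\<tau> 0) r (\<tau> (Suc i)) < x (j,i)")
    case True
    have num: "psi \<beta> \<tau> r am ap m j x = bb_density l r (am j) (ap j) ts (\<lambda>i. x (j, i)) * heat (r - l) (ap j - am j)"
      if j: "j \<in> J" for j
    proof -
      have hp: "heat (r - l) (ap j - am j) > 0" using lr by (intro heat_pos) simp
      define pos where "pos = (\<lambda>i. if i = 0 then am j else if i \<le> m then x (j, i - 1) else ap j)"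
      have "bb_density l r (am j) (ap j) ts (\<lambda>i. x (j, i)) * heat (r - l) (ap j - am j)
         = (\<Prod>i\<le>m. heat (\<tau> (Suc i) - \<tau> i) (pos (Suc i) - pos i))"
        unfolding bb_density_def Let_def m_def[symmetric] \<tau>_def[symmetric] pos_def using hp by simp
      also have "... = (\<Prod>i<m. heat (\<tau> (Suc i) - \<tau> i) (pos (Suc i) - pos i)) * heat (\<tau> (Suc m) - \<tau> m) (pos (Suc m) - pos m)"
        unfolding lessThan_Suc_atMost[symmetric] prod.lessThan_Suc ..
      also have "... = psi \<beta> \<tau> r am ap m j x"
      proof -
        have "(\<Prod>i<m. heat (\<tau> (Suc i) - \<tau> i) (pos (Suc i) - pos i)) = Fp \<beta> \<tau> r am m j x"
          unfolding Fp_def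
        proof (intro prod.cong refl)
          fix i assume i: "i \<in> {..<m}"
          have "pos (Suc i) = x (j,i)" "pos i = posb am x j i" using i by (auto simp: pos_def posb_def)
          thus "heat (\<tau> (Suc i) - \<tau> i) (pos (Suc i) - pos i) = (if Lv \<beta> (\<tau> 0) r (\<tau> (Suc i)) < x (j,i) then heat (\<tau> (Suc i) - \<tau> i) (x (j,i) - posb am x j i) else 0)"
            using True j i by simp
        qed
        moreover have "\<tau> (Suc m) = r" by (simp add: \<tau>_def bb_time_def m_def)
        moreover have "pos (Suc m) = ap j" "pos m = posb am x j m" by (auto simp: pos_def posb_def)
        ultimately show ?thesis by (simp add: psi_Fp)
      qed
      finally show ?thesis ..
    qed
    have ind: "indicator {x. \<forall>j\<in>{1..k}. \<forall>i<m. x (j, i) > g (ts ! i)} x = (1::ennreal)"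
    proof -
      have "x (j, i) > g (ts ! i)" if "j \<in> {1..k}" "i < m" for j i
      proof -
        have "g (ts ! i) \<le> Lv \<beta> l r (ts ! i)" using gle tsP[OF that(2)] by simp
        also have "... < x (j,i)"
        proof -
          have "Lv \<beta> l r (\<tau> (Suc i)) < x (j,i)" using True[unfolded \<tau>0] that by (auto simp: J_def)
          thus ?thesis using \<tau>S[OF that(2)] by simp
        qed
        finally show ?thesis .
      qed
      thus ?thesis by simp
    qed
    have "(\<Prod>j\<in>{1..k}. bb_density l r (am j) (ap j) ts (\<lambda>i. x (j, i)))
        = (\<Prod>j\<in>J. psi \<beta> \<tau> r am ap m j x / heat (r - l) (ap j - am j))"
    proof (unfold J_def, intro prod.cong refl)
      fix j assume j: "j \<in> {1..k}"
      have hp: "heat (r - l) (ap j - am j) > 0" using lr by (intro heat_pos) simp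
      show "bb_density l r (am j) (ap j) ts (\<lambda>i. x (j, i)) = psi \<beta> \<tau> r am ap m j x / heat (r - l) (ap j - am j)"
        using num[of j] j hp by (simp add: J_def)
    qed
    also have "... = (\<Prod>j\<in>J. psi \<beta> \<tau> r am ap m j x) * (1 / Hc)"
      unfolding Hc_def by (simp add: prod_dividef)
    finally have "(\<Prod>j\<in>{1..k}. bb_density l r (am j) (ap j) ts (\<lambda>i. x (j, i))) = (\<Prod>j\<in>J. psi \<beta> \<tau> r am ap m j x) * (1 / Hc)" .
    moreover have "(\<Prod>j\<in>J. psi \<beta> \<tau> r am ap m j x) \<ge> 0"
      using mono \<tau>m by (intro prod_nonneg) (auto simp: psi_Fp intro!: mult_nonneg_nonneg Fp_nonneg less_imp_le[OF heat_pos])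
    ultimately show ?thesis using ind Hc by (simp add: ennreal_mult[symmetric])
  next
    case False
    then obtain j i where ji: "j \<in> J" "i < m" "\<not> Lv \<beta> (\<tau> 0) r (\<tau> (Suc i)) < x (j,i)" by auto
    have "Fp \<beta> \<tau> r am m j x = 0" unfolding Fp_def
      by (rule prod_zero) (use ji in auto)
    hence "(\<Prod>j\<in>J. psi \<beta> \<tau> r am ap m j x) = 0"
      by (intro prod_zero) (use ji in \<open>auto simp: psi_Fp J_def\<close>)
    thus ?thesis by simp
  qed
  have "ennreal (exp (- (8 * (b1 * T)\<^sup>2 * sqrt T) - 3 * real (card P)) ^ k)
     \<le> ennreal (Hc * exp (- (8 * \<beta>\<^sup>2 * (\<tau> m - \<tau> 0)) - 3 * real m) ^ card J) * ennreal (1 / Hc)"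
  proof -
    have "8 * \<beta>\<^sup>2 * (\<tau> m - \<tau> 0) \<le> 8 * (b1 * T)\<^sup>2 * sqrt T"
      using \<tau>m by (simp add: \<beta>_def mult_left_mono)
    hence "exp (- (8 * (b1 * T)\<^sup>2 * sqrt T) - 3 * real (card P)) \<le> exp (- (8 * \<beta>\<^sup>2 * (\<tau> m - \<tau> 0)) - 3 * real m)"
      by (simp add: m)
    hence "exp (- (8 * (b1 * T)\<^sup>2 * sqrt T) - 3 * real (card P)) ^ k \<le> exp (- (8 * \<beta>\<^sup>2 * (\<tau> m - \<tau> 0)) - 3 * real m) ^ card J"
      by (simp add: J_def power_mono)
    moreover have "ennreal (Hc * exp (- (8 * \<beta>\<^sup>2 * (\<tau> m - \<tau> 0)) - 3 * real m) ^ card J) * ennreal (1 / Hc)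
       = ennreal (exp (- (8 * \<beta>\<^sup>2 * (\<tau> m - \<tau> 0)) - 3 * real m) ^ card J)"
      using Hc by (simp add: ennreal_mult[symmetric])
    ultimately show ?thesis by (simp add: ennreal_leI)
  qed
  also have "... \<le> (\<integral>\<^sup>+x. ennreal (\<Prod>j\<in>J. psi \<beta> \<tau> r am ap m j x) \<partial>PiM (J\<times>{..<m}) (\<lambda>_. lborel)) * ennreal (1 / Hc)"
  proof (rule mult_right_mono)
    have "finite J" by (simp add: J_def)
    moreover have "\<forall>j\<in>J. am j \<ge> 0" "\<forall>j\<in>J. ap j \<ge> 0" using am ap by (auto simp: J_def)
    ultimately show "ennreal (Hc * exp (- (8 * \<beta>\<^sup>2 * (\<tau> m - \<tau> 0)) - 3 * real m) ^ card J) \<le> (\<integral>\<^sup>+x. ennreal (\<Prod>j\<in>J. psi \<beta> \<tau> r am ap m j x) \<partial>PiM (J\<times>{..<m}) (\<lambda>_. lborel))"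
      using main_ind[where J=J and n=m and \<tau>=\<tau> and r=r and \<beta>=\<beta> and am=am and ap=ap] \<tau>m mono \<beta>
      unfolding Hc_def \<tau>0 by blast
  qed simp
  also have "... = (\<integral>\<^sup>+x. ennreal (\<Prod>j\<in>J. psi \<beta> \<tau> r am ap m j x) * ennreal (1 / Hc) \<partial>PiM (J\<times>{..<m}) (\<lambda>_. lborel))"
    by (rule nn_integral_multc[OF prod_psi_measurable, symmetric])
  also have "... \<le> E_free_W k l r am ap g P"
    unfolding E_free_W_def Let_def ts_def[symmetric] m_def[symmetric] J_def
    by (intro nn_integral_mono pt[unfolded J_def])
  finally show ?thesis .
qed

theorem mainTheorem4:
  fixes k :: nat and b0 b1 lam0 lam1 :: real
  assumes "k \<ge> 1" "b0 > 0" "b1 > 0" "lam0 > 0" "lam1 > 0"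
  shows "\<exists>C > 0. \<forall>(b2::real) (T::real) (l::real) (r::real) (am::nat \<Rightarrow> real) (ap::nat \<Rightarrow> real)
            (g::real \<Rightarrow> real) (P::real set).
     b2 > 0 \<and> T \<ge> 10 \<and> l < r \<and>
     g l = 0 \<and> g r = 0 \<and>
     finite P \<and> P \<subseteq> {l<..<l + sqrt T} \<inter> {l<..<r} \<and>
     r - l \<le> b0 * T \<and> real (card P) \<le> b0 * T \<and>
     (\<forall>x\<in>{l..r}. \<forall>y\<in>{l..r}. \<bar>g x - g y\<bar> \<le> b1 * T * \<bar>x - y\<bar>) \<and>
     (\<forall>j\<in>{1..<k}. am j - am (j + 1) \<ge> lam0 * sqrt T \<and> ap j - ap (j + 1) \<ge> lam0 * sqrt T) \<and>
     am k - g l \<ge> lam1 * T \<and> ap k - g r \<ge> lam1 * T \<and>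
     am 1 - g l \<le> b2 * T\<^sup>2 \<and> ap 1 - g r \<le> b2 * T\<^sup>2
     \<longrightarrow> E_free_W k l r am ap g P \<ge> ennreal (inverse C * exp (- C * T powr (5/2)))"
proof -
  define C where "C = 1 + 8 * real k * b1\<^sup>2 + 3 * real k * b0"
  have C1: "C \<ge> 1" using assms by (simp add: C_def)
  show ?thesis
  proof (intro exI[of _ C] conjI allI impI)
    show "C > 0" using C1 by simp
  next
    fix b2 T l r :: real and am ap :: "nat \<Rightarrow> real" and g :: "real \<Rightarrow> real" and P :: "real set"
    assume H: "b2 > 0 \<and> T \<ge> 10 \<and> l < r \<and>
     g l = 0 \<and> g r = 0 \<and>
     finite P \<and> P \<subseteq> {l<..<l + sqrt T} \<inter> {l<..<r} \<and>
     r - l \<le> b0 * T \<and> real (card P) \<le> b0 * T \<and>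
     (\<forall>x\<in>{l..r}. \<forall>y\<in>{l..r}. \<bar>g x - g y\<bar> \<le> b1 * T * \<bar>x - y\<bar>) \<and>
     (\<forall>j\<in>{1..<k}. am j - am (j + 1) \<ge> lam0 * sqrt T \<and> ap j - ap (j + 1) \<ge> lam0 * sqrt T) \<and>
     am k - g l \<ge> lam1 * T \<and> ap k - g r \<ge> lam1 * T \<and>
     am 1 - g l \<le> b2 * T\<^sup>2 \<and> ap 1 - g r \<le> b2 * T\<^sup>2"
    have T: "T \<ge> 10" using H by simp
    have ch: "\<forall>j\<in>{1..<k}. am (j+1) \<le> am j \<and> ap (j+1) \<le> ap j"
    proof
      fix j assume "j \<in> {1..<k}"
      hence "am j - am (j + 1) \<ge> lam0 * sqrt T \<and> ap j - ap (j + 1) \<ge> lam0 * sqrt T" using H by blast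
      moreover have "lam0 * sqrt T \<ge> 0" using assms T by simp
      ultimately show "am (j+1) \<le> am j \<and> ap (j+1) \<le> ap j" by linarith
    qed
    have l1: "lam1 * T \<ge> 0" using assms T by simp
    have amk: "am k \<ge> 0" "ap k \<ge> 0" using H l1 by linarith+
    have ch1: "\<forall>j\<in>{1..<k}. am (j+1) \<le> am j" and ch2: "\<forall>j\<in>{1..<k}. ap (j+1) \<le> ap j" using ch by auto
    have am: "\<forall>j\<in>{1..k}. am j \<ge> 0" "\<forall>j\<in>{1..k}. ap j \<ge> 0"
    proof -
      show "\<forall>j\<in>{1..k}. am j \<ge> 0"
      proof
        fix j assume "j \<in> {1..k}"
        hence "am k \<le> am j" using chain_ge[OF ch1] by auto
        thus "am j \<ge> 0" using amk by linarith
      qed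
      show "\<forall>j\<in>{1..k}. ap j \<ge> 0"
      proof
        fix j assume "j \<in> {1..k}"
        hence "ap k \<le> ap j" using chain_ge[OF ch2] by auto
        thus "ap j \<ge> 0" using amk by linarith
      qed
    qed
    have E: "E_free_W k l r am ap g P \<ge> ennreal (exp (- (8 * (b1 * T)\<^sup>2 * sqrt T) - 3 * real (card P)) ^ k)"
      using H assms am by (intro key) auto
    have p52: "T powr (5/2) = T\<^sup>2 * sqrt T"
    proof -
      have a: "T powr (2 + 1/2) = T powr 2 * T powr (1/2)" by (rule powr_add)
      have b: "(2::real) + 1/2 = 5/2" by simp
      have c: "T powr 2 = T\<^sup>2" using T by simp
      show ?thesis using a T unfolding b c by (simp add: powr_half_sqrt)
    qed
    have Tp: "T \<le> T powr (5/2)"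
    proof -
      have "T powr 1 \<le> T powr (5/2)" using T by (intro powr_mono) auto
      thus ?thesis using T by simp
    qed
    have cardP: "3 * real (card P) \<le> 3 * b0 * T powr (5/2)"
    proof -
      have "b0 * T \<le> b0 * T powr (5/2)" using Tp assms by (intro mult_left_mono) auto
      thus ?thesis using H by linarith
    qed
    have "real k * (8 * (b1 * T)\<^sup>2 * sqrt T + 3 * real (card P)) \<le> real k * (8 * b1\<^sup>2 * T powr (5/2) + 3 * b0 * T powr (5/2))"
      using cardP p52 by (intro mult_left_mono) (auto simp: power_mult_distrib)
    also have "... \<le> C * T powr (5/2)" unfolding C_def by (simp add: algebra_simps)
    finally have ex: "- C * T powr (5/2) \<le> real k * (- (8 * (b1 * T)\<^sup>2 * sqrt T) - 3 * real (card P))"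
      by (simp add: algebra_simps)
    have "inverse C * exp (- C * T powr (5/2)) \<le> exp (- C * T powr (5/2))"
      using C1 by (intro mult_left_le_one_le) (auto simp: inverse_le_1_iff)
    also have "... \<le> exp (real k * (- (8 * (b1 * T)\<^sup>2 * sqrt T) - 3 * real (card P)))"
      using ex by simp
    also have "... = exp (- (8 * (b1 * T)\<^sup>2 * sqrt T) - 3 * real (card P)) ^ k"
      by (simp add: exp_of_nat_mult)
    finally show "E_free_W k l r am ap g P \<ge> ennreal (inverse C * exp (- C * T powr (5/2)))"
      using E by (meson ennreal_leI order.trans)
  qed
qed

end
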